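(* Let $T:\mathcal{M}_d\to\mathcal{M}_d$ be a doubly stochastic quantum channel, $X\in\mathcal{M}_d$ positive definite and $q\geq2$. Then $$\|T(X)\|_{q,\frac{\mathbb{1}_d}{d}}^q-\|X\|_{q,\frac{\mathbb{1}_d}{d}}^q\leq-\mathcal{E}^2_{T^*T-\text{id}}(X^{q/2}).$$
   Context: Doubly stochastic channel: completely positive, trace preserving, $T(\mathbb{1})=T^*(\mathbb{1})=\mathbb{1}$ ($T^*$ the Hilbert–Schmidt adjoint). Weighted norm: $\|Y\|_{p,\frac{\mathbb{1}_d}{d}}=d^{-1/p}(\text{tr}|Y|^p)^{1/p}$. Dirichlet form: $\mathcal{E}^2_{\mathcal{L}}(Y)=-\frac1d\text{tr}[\mathcal{L}(Y)Y]$. *)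

theory Defs
  imports "Jordan_Normal_Form.Schur_Decomposition"
begin

text \<open>Matrices in M_d are complex d x d matrices (Jordan_Normal_Form mat with carrier_mat d d).\<close>

definition mtrace :: "complex mat \<Rightarrow> complex" where
  "mtrace A = (\<Sum>i<dim_row A. A $$ (i, i))"

definition hermitian_mat :: "nat \<Rightarrow> complex mat \<Rightarrow> bool" where
  "hermitian_mat d A \<longleftrightarrow> A \<in> carrier_mat d d \<and> mat_adjoint A = A"

definition psd_mat :: "nat \<Rightarrow> complex mat \<Rightarrow> bool" where
  "psd_mat d A \<longleftrightarrow> hermitian_mat d A \<and>
     (\<forall>v \<in> carrier_vec d. 0 \<le> Re ((A *\<^sub>v v) \<bullet>c v))"

definition pd_mat :: "nat \<Rightarrow> complex mat \<Rightarrow> bool" where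
  "pd_mat d A \<longleftrightarrow> hermitian_mat d A \<and>
     (\<forall>v \<in> carrier_vec d. v \<noteq> 0\<^sub>v d \<longrightarrow> 0 < Re ((A *\<^sub>v v) \<bullet>c v))"

definition unitary_mat :: "nat \<Rightarrow> complex mat \<Rightarrow> bool" where
  "unitary_mat d U \<longleftrightarrow> U \<in> carrier_mat d d \<and> U * mat_adjoint U = 1\<^sub>m d \<and> mat_adjoint U * U = 1\<^sub>m d"

definition mat_fun :: "nat \<Rightarrow> (real \<Rightarrow> real) \<Rightarrow> complex mat \<Rightarrow> complex mat" where
  "mat_fun d f A = (SOME B. \<exists>U s. unitary_mat d U \<and>
      A = U * mat_diag d (\<lambda>i. complex_of_real (s i)) * mat_adjoint U \<and>
      B = U * mat_diag d (\<lambda>i. complex_of_real (f (s i))) * mat_adjoint U)"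

definition mat_abs :: "nat \<Rightarrow> complex mat \<Rightarrow> complex mat" where
  "mat_abs d Y = mat_fun d sqrt (mat_adjoint Y * Y)"

definition mat_rpow :: "nat \<Rightarrow> complex mat \<Rightarrow> real \<Rightarrow> complex mat" where
  "mat_rpow d A p = mat_fun d (\<lambda>x. x powr p) A"

definition wnorm :: "nat \<Rightarrow> real \<Rightarrow> complex mat \<Rightarrow> real" where
  "wnorm d p Y = real d powr (- 1 / p) * (Re (mtrace (mat_rpow d (mat_abs d Y) p))) powr (1 / p)"

text \<open>Dirichlet form  E_L(Y) = -(1/d) tr[L(Y) Y]  (a real number in the situation considered).\<close>
definition dirichlet :: "nat \<Rightarrow> (complex mat \<Rightarrow> complex mat) \<Rightarrow> complex mat \<Rightarrow> real" where
  "dirichlet d L Y = - (1 / real d) * Re (mtrace (L Y * Y))"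

definition linear_map_mat :: "nat \<Rightarrow> (complex mat \<Rightarrow> complex mat) \<Rightarrow> bool" where
  "linear_map_mat d T \<longleftrightarrow>
     (\<forall>A \<in> carrier_mat d d. T A \<in> carrier_mat d d) \<and>
     (\<forall>A \<in> carrier_mat d d. \<forall>B \<in> carrier_mat d d. T (A + B) = T A + T B) \<and>
     (\<forall>A \<in> carrier_mat d d. \<forall>c. T (c \<cdot>\<^sub>m A) = c \<cdot>\<^sub>m T A)"

text \<open>(id_k \<otimes> T) applied to a (k d) x (k d) matrix: T acts on each d x d block.\<close>
definition ampliate :: "nat \<Rightarrow> nat \<Rightarrow> (complex mat \<Rightarrow> complex mat) \<Rightarrow> complex mat \<Rightarrow> complex mat" where
  "ampliate k d T M = Matrix.mat (k * d) (k * d) (\<lambda>(i, j).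
      T (Matrix.mat d d (\<lambda>(a, b). M $$ ((i div d) * d + a, (j div d) * d + b))) $$ (i mod d, j mod d))"

definition completely_positive :: "nat \<Rightarrow> (complex mat \<Rightarrow> complex mat) \<Rightarrow> bool" where
  "completely_positive d T \<longleftrightarrow>
     (\<forall>k. \<forall>M. psd_mat (k * d) M \<longrightarrow> psd_mat (k * d) (ampliate k d T M))"

definition trace_preserving :: "nat \<Rightarrow> (complex mat \<Rightarrow> complex mat) \<Rightarrow> bool" where
  "trace_preserving d T \<longleftrightarrow> (\<forall>A \<in> carrier_mat d d. mtrace (T A) = mtrace A)"

definition hs_adjoint :: "nat \<Rightarrow> (complex mat \<Rightarrow> complex mat) \<Rightarrow> complex mat \<Rightarrow> complex mat" where
  "hs_adjoint d T A = (SOME C. C \<in> carrier_mat d d \<and>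
      (\<forall>B \<in> carrier_mat d d. mtrace (mat_adjoint C * B) = mtrace (mat_adjoint A * T B)))"

definition doubly_stochastic_channel :: "nat \<Rightarrow> (complex mat \<Rightarrow> complex mat) \<Rightarrow> bool" where
  "doubly_stochastic_channel d T \<longleftrightarrow>
     linear_map_mat d T \<and> completely_positive d T \<and> trace_preserving d T \<and>
     T (1\<^sub>m d) = 1\<^sub>m d \<and> hs_adjoint d T (1\<^sub>m d) = 1\<^sub>m d"

end

theory Submission
  imports Defs "HOL-Analysis.Convex" "HOL-Computational_Algebra.Fundamental_Theorem_Algebra"
begin


lemma adj_dims[simp]: "dim_row (mat_adjoint A) = dim_col A" "dim_col (mat_adjoint A) = dim_row A"
  by (simp_all add: mat_adjoint_def mat_of_rows_def)

lemma adj_index[simp]: "i < dim_col A \<Longrightarrow> j < dim_row A \<Longrightarrow> mat_adjoint A $$ (i,j) = cnj (A $$ (j,i))"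
  by (simp add: mat_adjoint_def mat_of_rows_def cols_def)

lemma adj_carrier[simp]: "A \<in> carrier_mat n m \<Longrightarrow> mat_adjoint A \<in> carrier_mat m n"
  by (metis adj_dims carrier_matD carrier_matI)

lemma adj_adj[simp]: "mat_adjoint (mat_adjoint A) = (A :: complex mat)"
  by (rule eq_matI) simp_all

lemma adj_mult: assumes "A \<in> carrier_mat n k" "B \<in> carrier_mat k m"
  shows "mat_adjoint (A * B) = mat_adjoint B * mat_adjoint (A :: complex mat)"
  using assms by (intro eq_matI) (simp_all add: scalar_prod_def cnj_sum mult.commute)

lemma adj_one[simp]: "mat_adjoint (1\<^sub>m n :: complex mat) = 1\<^sub>m n"
  by (rule eq_matI) simp_all

lemma adj_diag_real[simp]: "mat_adjoint (mat_diag n (\<lambda>i. complex_of_real (s i))) = mat_diag n (\<lambda>i. complex_of_real (s i))"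
  by (rule eq_matI) (simp_all add: mat_diag_def)

lemma adj_add: assumes "A \<in> carrier_mat n m" "B \<in> carrier_mat n m"
  shows "mat_adjoint (A + B) = mat_adjoint A + mat_adjoint (B :: complex mat)"
  using assms by (intro eq_matI) simp_all

lemma adj_smult: "mat_adjoint (c \<cdot>\<^sub>m A) = cnj c \<cdot>\<^sub>m mat_adjoint (A :: complex mat)"
  by (intro eq_matI) simp_all

lemma cnorm_pos: assumes "w \<in> carrier_vec n" "w \<noteq> 0\<^sub>v n"
  shows "w \<bullet>c w = complex_of_real (Re (w \<bullet>c w)) \<and> Re (w \<bullet>c w) > 0"
proof -
  have "w \<bullet>c w > 0" using assms conjugate_square_greater_0_vec by blast
  then show ?thesis by (simp add: less_complex_def complex_eq_iff)
qed

lemma unit_extend: assumes v: "v \<in> carrier_vec n" and v1: "v \<bullet>c v = 1" and n: "n > 0"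
  shows "\<exists>W. unitary_mat n W \<and> col W 0 = v"
proof -
  have v0: "v \<noteq> 0\<^sub>v n" using v1 v by auto
  interpret cof_vec_space n "TYPE(complex)" .
  define b where "b = basis_completion v"
  from basis_completion[OF v v0, folded b_def]
  have b: "set b \<subseteq> carrier_vec n" and dist_b: "distinct b" 
    and indep: "\<not> lin_dep (set b)" and hdb: "hd b = v" and len_b: "length b = n" by auto
  define ws where "ws = gram_schmidt n b"
  from gram_schmidt_result[OF b dist_b indep ws_def]
  have ws: "set ws \<subseteq> carrier_vec n" "corthogonal ws" "length ws = n" using len_b by auto
  from hdb len_b n obtain vs where bv: "b = v # vs" by (cases b, auto)
  have hdws: "hd ws = v" unfolding ws_def bv using v by simp
  define sc where "sc = (\<lambda>w::complex vec. complex_of_real (1 / sqrt (Re (w \<bullet>c w))))"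
  define us where "us = map (\<lambda>w. sc w \<cdot>\<^sub>v w) ws"
  have wsi: "\<And>i. i < n \<Longrightarrow> ws ! i \<in> carrier_vec n" using ws by auto
  have wsnz: "\<And>i. i < n \<Longrightarrow> ws ! i \<noteq> 0\<^sub>v n"
  proof
    fix i assume i: "i < n" and z: "ws ! i = 0\<^sub>v n"
    have "ws ! i \<bullet>c ws ! i = 0" using z by simp
    with corthogonalD[OF ws(2)] i ws(3) show False by auto
  qed
  have usi: "\<And>i. i < n \<Longrightarrow> us ! i \<in> carrier_vec n" unfolding us_def using wsi ws(3) by auto
  have orth: "\<And>i j. i < n \<Longrightarrow> j < n \<Longrightarrow> us ! i \<bullet>c us ! j = (if i = j then 1 else 0)"
  proof -
    fix i j assume i: "i < n" and j: "j < n"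
    have "us ! i \<bullet>c us ! j = (sc (ws!i) \<cdot>\<^sub>v ws!i) \<bullet> (conjugate (sc (ws!j)) \<cdot>\<^sub>v conjugate (ws!j))"
      unfolding us_def using i j ws(3) by (simp add: conjugate_smult_vec)
    also have "\<dots> = sc (ws!i) * cnj (sc (ws!j)) * (ws ! i \<bullet>c ws ! j)"
      using wsi[OF i] wsi[OF j] by (simp add: mult.assoc)
    also have "\<dots> = (if i = j then 1 else 0)"
    proof (cases "i = j")
      case True
      from cnorm_pos[OF wsi[OF i] wsnz[OF i]] obtain r where r: "ws ! i \<bullet>c ws ! i = complex_of_real r" "r > 0" by blast
      have "sc (ws!i) * cnj (sc (ws!i)) * (ws ! i \<bullet>c ws ! i) = complex_of_real (1 / sqrt r * (1 / sqrt r) * r)"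
        unfolding sc_def r by (simp only: Re_complex_of_real complex_cnj_complex_of_real of_real_mult)
      also have "1 / sqrt r * (1 / sqrt r) * r = 1" using r(2)
        by (simp add: field_simps)
      finally show ?thesis using True by simp
    next
      case False
      then show ?thesis using corthogonalD[OF ws(2)] i j ws(3) by auto
    qed
    finally show "us ! i \<bullet>c us ! j = (if i = j then 1 else 0)" .
  qed
  have hdus: "us ! 0 = v"
  proof -
    have "ws ! 0 = v" using hdws n ws(3) by (cases ws) auto
    then show ?thesis unfolding us_def sc_def using n ws(3) v1 by simp
  qed
  define W where "W = mat_of_cols n us"
  have W: "W \<in> carrier_mat n n" unfolding W_def using mat_of_cols_carrier(1)[of n us] ws(3) by (simp add: us_def)
  have colW: "\<And>j. j < n \<Longrightarrow> col W j = us ! j" unfolding W_def using ws(3) usi by (simp add: us_def)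
  have WW: "mat_adjoint W * W = 1\<^sub>m n"
  proof (rule eq_matI)
    fix i j assume i: "i < dim_row (1\<^sub>m n :: complex mat)" and j: "j < dim_col (1\<^sub>m n :: complex mat)"
    have "(mat_adjoint W * W) $$ (i,j) = (\<Sum>k<n. cnj (W $$ (k,i)) * W $$ (k,j))"
      using i j W by (simp add: scalar_prod_def lessThan_atLeast0)
    also have "\<dots> = us ! j \<bullet>c us ! i"
      using i j colW[of i, symmetric] colW[of j, symmetric] W usi
      by (simp add: scalar_prod_def lessThan_atLeast0 mult.commute)
    also have "\<dots> = 1\<^sub>m n $$ (i,j)" using orth i j by auto
    finally show "(mat_adjoint W * W) $$ (i,j) = 1\<^sub>m n $$ (i,j)" .
  qed (use W in auto)
  have WW2: "W * mat_adjoint W = 1\<^sub>m n"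
    by (rule mat_mult_left_right_inverse[OF adj_carrier[OF W] W WW])
  show ?thesis
    by (rule exI[of _ W]) (use W WW WW2 colW[of 0] n hdus in \<open>auto simp: unitary_mat_def\<close>)
qed

lemma adj_four_block: assumes "A \<in> carrier_mat n1 n1" "D \<in> carrier_mat n2 n2"
  "B \<in> carrier_mat n1 n2" "C \<in> carrier_mat n2 n1"
  shows "mat_adjoint (four_block_mat A B C D) = four_block_mat (mat_adjoint A) (mat_adjoint C) (mat_adjoint B) (mat_adjoint (D :: complex mat))"
  using assms by (intro eq_matI) (auto simp: index_mat_four_block)

lemma mat_diag_dims[simp]: "dim_row (mat_diag n f) = n" "dim_col (mat_diag n f) = n"
  by (simp_all add: mat_diag_def)

lemma mult_carrier_sq[simp]: "A \<in> carrier_mat n n \<Longrightarrow> B \<in> carrier_mat n n \<Longrightarrow> A * B \<in> carrier_mat n n"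
  by (rule mult_carrier_mat)

theorem spectral:
  assumes "A \<in> carrier_mat n n" "mat_adjoint A = A"
  shows "\<exists>U s. unitary_mat n U \<and> A = U * mat_diag n (\<lambda>i. complex_of_real (s i)) * mat_adjoint U"
  using assms
proof (induction n arbitrary: A)
  case 0
  then show ?case
    by (intro exI[of _ "1\<^sub>m 0"] exI[of _ "\<lambda>_. 0"]) (auto simp: unitary_mat_def intro!: eq_matI)
next
  case (Suc m A)
  let ?n = "Suc m"
  have A: "A \<in> carrier_mat ?n ?n" and hA: "mat_adjoint A = A" using Suc.prems by auto
  have deg: "degree (char_poly A) = ?n" using degree_monic_char_poly[OF A] by auto
  have "\<exists>z. poly (char_poly A) z = 0"
    by (rule fundamental_theorem_of_algebra_alt) (use deg in \<open>metis degree_pCons_0 Zero_not_Suc\<close>)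
  then obtain e where "poly (char_poly A) e = 0" by blast
  then have "eigenvalue A e" using eigenvalue_root_char_poly[OF A] by blast
  from find_eigenvector[OF A this] obtain v where ev: "eigenvector A v e" by blast
  then have v: "v \<in> carrier_vec ?n" and v0: "v \<noteq> 0\<^sub>v ?n" and Av: "A *\<^sub>v v = e \<cdot>\<^sub>v v"
    unfolding eigenvector_def using A by auto
  from cnorm_pos[OF v v0] obtain r where r: "v \<bullet>c v = complex_of_real r" "r > 0" by blast
  define v' where "v' = complex_of_real (1 / sqrt r) \<cdot>\<^sub>v v"
  have v': "v' \<in> carrier_vec ?n" unfolding v'_def using v by simp
  have v'1: "v' \<bullet>c v' = 1"
  proof -
    have "v' \<bullet>c v' = complex_of_real (1 / sqrt r) * cnj (complex_of_real (1 / sqrt r)) * (v \<bullet>c v)"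
      unfolding v'_def using v by (simp add: conjugate_smult_vec mult.assoc)
    also have "\<dots> = complex_of_real (1 / sqrt r * (1 / sqrt r) * r)"
      unfolding r by (simp only: complex_cnj_complex_of_real of_real_mult)
    also have "1 / sqrt r * (1 / sqrt r) * r = 1" using r(2) by (simp add: field_simps)
    finally show ?thesis by simp
  qed
  have Av': "A *\<^sub>v v' = e \<cdot>\<^sub>v v'"
    unfolding v'_def using A v Av by (simp add: mult_mat_vec smult_smult_assoc mult.commute)
  from unit_extend[OF v' v'1] obtain W where W: "unitary_mat ?n W" and colW: "col W 0 = v'" by auto
  have Wc: "W \<in> carrier_mat ?n ?n" and WW: "mat_adjoint W * W = 1\<^sub>m ?n" and WW2: "W * mat_adjoint W = 1\<^sub>m ?n"
    using W unfolding unitary_mat_def by auto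
  define A' where "A' = mat_adjoint W * A * W"
  have A'c: "A' \<in> carrier_mat ?n ?n" unfolding A'_def using Wc A by auto
  have hA': "mat_adjoint A' = A'"
    unfolding A'_def using Wc A hA
    by (simp add: adj_mult[of _ ?n ?n _ ?n] assoc_mult_mat[of _ ?n ?n _ ?n _ ?n])
  have col0: "\<And>i. i < ?n \<Longrightarrow> A' $$ (i,0) = (if i = 0 then e else 0)"
  proof -
    fix i assume i: "i < ?n"
    have "A' = mat_adjoint W * (A * W)" unfolding A'_def using Wc A by (simp add: assoc_mult_mat[of _ ?n ?n _ ?n _ ?n])
    then have "A' $$ (i,0) = row (mat_adjoint W) i \<bullet> col (A * W) 0" using i Wc A by simp
    also have "col (A * W) 0 = A *\<^sub>v col W 0" by (rule col_mult2[OF A Wc]) simp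
    also have "\<dots> = e \<cdot>\<^sub>v col W 0" using Av' colW by simp
    also have "row (mat_adjoint W) i \<bullet> (e \<cdot>\<^sub>v col W 0) = e * (row (mat_adjoint W) i \<bullet> col W 0)"
      using Wc i by simp
    also have "row (mat_adjoint W) i \<bullet> col W 0 = (mat_adjoint W * W) $$ (i,0)" using i Wc by simp
    also have "\<dots> = (if i = 0 then 1 else 0)" using WW i by simp
    finally show "A' $$ (i,0) = (if i = 0 then e else 0)" by simp
  qed
  have ereal: "e = complex_of_real (Re e)"
  proof -
    have "e = A' $$ (0,0)" using col0[of 0] by simp
    also have "\<dots> = mat_adjoint A' $$ (0,0)" using hA' by simp
    also have "\<dots> = cnj e" using A'c col0[of 0] by simp
    finally have ec: "e = cnj e" .
    have "Im e = - Im e" using arg_cong[OF ec, of Im] by simp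
    then have "Im e = 0" by simp
    then show ?thesis by (simp add: complex_eq_iff)
  qed
  have row0: "\<And>j. j < ?n \<Longrightarrow> A' $$ (0,j) = (if j = 0 then e else 0)"
  proof -
    fix j assume j: "j < ?n"
    have "A' $$ (0,j) = mat_adjoint A' $$ (0,j)" using hA' by simp
    also have "\<dots> = cnj (A' $$ (j,0))" using A'c j by simp
    finally have "A' $$ (0,j) = cnj (if j = 0 then e else 0)" using col0[OF j] by simp
    moreover have "cnj e = e" using ereal by (metis complex_cnj_complex_of_real)
    ultimately show "A' $$ (0,j) = (if j = 0 then e else 0)" by auto
  qed
  define A3 where "A3 = Matrix.mat m m (\<lambda>(i,j). A' $$ (Suc i, Suc j))"
  have A3c: "A3 \<in> carrier_mat m m" unfolding A3_def by simp
  have hA3: "mat_adjoint A3 = A3"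
  proof (rule eq_matI)
    fix i j assume "i < dim_row A3" "j < dim_col A3"
    then have i: "i < m" and j: "j < m" unfolding A3_def by auto
    have "mat_adjoint A3 $$ (i,j) = cnj (A' $$ (Suc j, Suc i))" using i j unfolding A3_def by simp
    also have "\<dots> = mat_adjoint A' $$ (Suc i, Suc j)" using i j A'c by simp
    also have "\<dots> = A3 $$ (i,j)" using hA' i j unfolding A3_def by simp
    finally show "mat_adjoint A3 $$ (i,j) = A3 $$ (i,j)" .
  qed (auto simp: A3_def)
  from Suc.IH[OF A3c hA3] obtain V s where V: "unitary_mat m V"
    and A3eq: "A3 = V * mat_diag m (\<lambda>i. complex_of_real (s i)) * mat_adjoint V" by blast
  have Vc: "V \<in> carrier_mat m m" and VV: "mat_adjoint V * V = 1\<^sub>m m" and VV2: "V * mat_adjoint V = 1\<^sub>m m"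
    using V unfolding unitary_mat_def by auto
  define E where "E = four_block_mat (1\<^sub>m 1) (0\<^sub>m 1 m) (0\<^sub>m m 1) V"
  define g where "g = (\<lambda>i. if i = 0 then Re e else s (i - 1))"
  define D where "D = mat_diag ?n (\<lambda>i. complex_of_real (g i))"
  define Ds where "Ds = mat_diag m (\<lambda>i. complex_of_real (s i))"
  have Ec: "E \<in> carrier_mat ?n ?n" unfolding E_def using Vc four_block_carrier_mat[of "1\<^sub>m 1" 1 1 V m m] by simp
  have adjE: "mat_adjoint E = four_block_mat (1\<^sub>m 1) (0\<^sub>m 1 m) (0\<^sub>m m 1) (mat_adjoint V)"
    unfolding E_def by (subst adj_four_block[of _ 1 _ m]) (use Vc in auto)
  have Dblock: "D = four_block_mat (mat_diag 1 (\<lambda>_. e)) (0\<^sub>m 1 m) (0\<^sub>m m 1) Ds"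
    unfolding D_def Ds_def g_def by (rule eq_matI) (auto simp: mat_diag_def ereal[symmetric])
  have EE: "mat_adjoint E * E = 1\<^sub>m ?n"
    unfolding adjE unfolding E_def using Vc VV
    by (subst mult_four_block_mat[of _ 1 1 _ m _ m _ _ 1 _ m]) auto
  have EE2: "E * mat_adjoint E = 1\<^sub>m ?n"
    unfolding adjE unfolding E_def using Vc VV2
    by (subst mult_four_block_mat[of _ 1 1 _ m _ m _ _ 1 _ m]) auto
  have ED: "E * D = four_block_mat (mat_diag 1 (\<lambda>_. e)) (0\<^sub>m 1 m) (0\<^sub>m m 1) (V * Ds)"
    unfolding E_def Dblock Ds_def using Vc
    by (subst mult_four_block_mat[of _ 1 1 _ m _ m _ _ 1 _ m]) auto
  have EDE: "E * D * mat_adjoint E = four_block_mat (mat_diag 1 (\<lambda>_. e)) (0\<^sub>m 1 m) (0\<^sub>m m 1) A3"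
    unfolding ED adjE A3eq Ds_def[symmetric] using Vc
    by (subst mult_four_block_mat[of _ 1 1 _ m _ m _ _ 1 _ m]) (auto simp: Ds_def)
  have A'eq: "A' = E * D * mat_adjoint E"
    unfolding EDE
  proof (rule eq_matI)
    fix i j assume i: "i < dim_row (four_block_mat (mat_diag 1 (\<lambda>_. e)) (0\<^sub>m 1 m) (0\<^sub>m m 1) A3)"
      and j: "j < dim_col (four_block_mat (mat_diag 1 (\<lambda>_. e)) (0\<^sub>m 1 m) (0\<^sub>m m 1) A3)"
    then have i': "i < ?n" and j': "j < ?n" using A3c by auto
    show "A' $$ (i,j) = four_block_mat (mat_diag 1 (\<lambda>_. e)) (0\<^sub>m 1 m) (0\<^sub>m m 1) A3 $$ (i,j)"
    proof (cases "i = 0 \<or> j = 0")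
      case True
      then show ?thesis using col0[OF i'] row0[OF j'] i j A3c by (auto simp: mat_diag_def)
    next
      case False
      then obtain i1 j1 where "i = Suc i1" "j = Suc j1" by (metis not0_implies_Suc)
      then show ?thesis using i j A3c i' j' by (simp add: A3_def)
    qed
  qed (use A3c A'c in \<open>auto simp: mat_diag_def\<close>)
  define U where "U = W * E"
  have Uc: "U \<in> carrier_mat ?n ?n" unfolding U_def using Wc Ec by simp
  have adjU: "mat_adjoint U = mat_adjoint E * mat_adjoint W" unfolding U_def by (rule adj_mult[OF Wc Ec])
  have UU: "mat_adjoint U * U = 1\<^sub>m ?n"
  proof -
    have "mat_adjoint U * U = mat_adjoint E * (mat_adjoint W * W) * E"
      unfolding adjU unfolding U_def using Wc Ec
      by (simp add: assoc_mult_mat[of _ ?n ?n _ ?n _ ?n])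
    then show ?thesis using WW EE Ec by simp
  qed
  have UU2: "U * mat_adjoint U = 1\<^sub>m ?n"
  proof -
    have "U * mat_adjoint U = W * (E * mat_adjoint E) * mat_adjoint W"
      unfolding adjU unfolding U_def using Wc Ec
      by (simp add: assoc_mult_mat[of _ ?n ?n _ ?n _ ?n])
    then show ?thesis using WW2 EE2 Wc by simp
  qed
  have "A = W * A' * mat_adjoint W"
  proof -
    have "W * A' * mat_adjoint W = (W * mat_adjoint W) * A * (W * mat_adjoint W)"
      unfolding A'_def using Wc A by (simp add: assoc_mult_mat[of _ ?n ?n _ ?n _ ?n])
    then show ?thesis using WW2 A by simp
  qed
  also have "\<dots> = U * D * (mat_adjoint E * mat_adjoint W)"
    unfolding A'eq U_def D_def using Wc Ec adj_carrier[OF Wc] adj_carrier[OF Ec]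
    by (simp add: assoc_mult_mat[of _ ?n ?n _ ?n _ ?n])
  also have "\<dots> = U * D * mat_adjoint U" unfolding adjU ..
  finally show ?case using Uc UU UU2 unfolding D_def unitary_mat_def by blast
qed


abbreviation rdiag :: "nat \<Rightarrow> (nat \<Rightarrow> real) \<Rightarrow> complex mat" where
  "rdiag n s \<equiv> mat_diag n (\<lambda>i. complex_of_real (s i))"

lemma unitaryD: assumes "unitary_mat n U"
  shows "U \<in> carrier_mat n n" "mat_adjoint U * U = 1\<^sub>m n" "U * mat_adjoint U = 1\<^sub>m n"
  using assms unfolding unitary_mat_def by auto

lemma unitary_cancel: assumes "unitary_mat n U" "dim_row X = n"
  shows "mat_adjoint U * (U * X) = X" "U * (mat_adjoint U * X) = X"
proof -
  have U: "U \<in> carrier_mat n n" using unitaryD[OF assms(1)] by auto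
  have X: "X \<in> carrier_mat n (dim_col X)" using assms(2) by (intro carrier_matI) auto
  have "mat_adjoint U * (U * X) = (mat_adjoint U * U) * X"
    by (rule assoc_mult_mat[symmetric, OF adj_carrier[OF U] U X])
  also have "\<dots> = 1\<^sub>m n * X" using unitaryD(2)[OF assms(1)] by simp
  also have "\<dots> = X" by (rule left_mult_one_mat[OF X])
  finally show "mat_adjoint U * (U * X) = X" .
  have "U * (mat_adjoint U * X) = (U * mat_adjoint U) * X"
    by (rule assoc_mult_mat[symmetric, OF U adj_carrier[OF U] X])
  also have "\<dots> = 1\<^sub>m n * X" using unitaryD(3)[OF assms(1)] by simp
  also have "\<dots> = X" by (rule left_mult_one_mat[OF X])
  finally show "U * (mat_adjoint U * X) = X" .
qed

lemma diag_intertwine: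
  assumes G: "G \<in> carrier_mat n n" and eq: "G * rdiag n s = rdiag n t * G"
  shows "G * rdiag n (\<lambda>i. f (s i)) = rdiag n (\<lambda>i. f (t i)) * G"
proof -
  have e: "\<And>i j. i < n \<Longrightarrow> j < n \<Longrightarrow> G $$ (i,j) * complex_of_real (s j) = complex_of_real (t i) * G $$ (i,j)"
  proof -
    fix i j assume i: "i < n" and j: "j < n"
    have "(G * rdiag n s) $$ (i,j) = (rdiag n t * G) $$ (i,j)" using eq by simp
    then show "G $$ (i,j) * complex_of_real (s j) = complex_of_real (t i) * G $$ (i,j)"
      using i j G by (simp add: mat_diag_mult_left[OF G] mat_diag_mult_right[OF G])
  qed
  show ?thesis
  proof (rule eq_matI)
    fix i j assume "i < dim_row (rdiag n (\<lambda>i. f (t i)) * G)" "j < dim_col (rdiag n (\<lambda>i. f (t i)) * G)"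
    then have i: "i < n" and j: "j < n" using G by auto
    have "G $$ (i,j) * complex_of_real (f (s j)) = complex_of_real (f (t i)) * G $$ (i,j)"
    proof (cases "G $$ (i,j) = 0")
      case False
      have "G $$ (i,j) * (complex_of_real (s j) - complex_of_real (t i)) = 0"
        using e[OF i j] by (simp add: right_diff_distrib mult.commute)
      then have "complex_of_real (s j) = complex_of_real (t i)" using False by simp
      then have "s j = t i" by simp
      then show ?thesis by (simp add: mult.commute)
    qed simp
    then show "(G * rdiag n (\<lambda>i. f (s i))) $$ (i,j) = (rdiag n (\<lambda>i. f (t i)) * G) $$ (i,j)"
      using i j G by (simp add: mat_diag_mult_left[OF G] mat_diag_mult_right[OF G])
  qed (use G in auto)
qed

lemma fc_unique:
  assumes U: "unitary_mat n U" and V: "unitary_mat n V"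
    and eq: "U * rdiag n s * mat_adjoint U = V * rdiag n t * mat_adjoint V"
  shows "U * rdiag n (\<lambda>i. f (s i)) * mat_adjoint U = V * rdiag n (\<lambda>i. f (t i)) * mat_adjoint V"
proof -
  note Uc = unitaryD(1)[OF U] and Vc = unitaryD(1)[OF V]
  note Ua = adj_carrier[OF Uc] and Va = adj_carrier[OF Vc]
  define G where "G = mat_adjoint V * U"
  have Gc: "G \<in> carrier_mat n n" unfolding G_def using Uc Va by simp
  have "G * rdiag n s = mat_adjoint V * ((U * rdiag n s * mat_adjoint U) * U)"
    unfolding G_def using Uc Va Ua
    by (simp add: assoc_mult_mat[of _ n n _ n _ n] unitary_cancel[OF U] unitaryD[OF U])
  also have "\<dots> = rdiag n t * G"
    unfolding eq G_def using Uc Va Vc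
    by (simp add: assoc_mult_mat[of _ n n _ n _ n] unitary_cancel[OF V] unitaryD[OF V])
  finally have "G * rdiag n (\<lambda>i. f (s i)) = rdiag n (\<lambda>i. f (t i)) * G"
    by (rule diag_intertwine[OF Gc])
  then have "V * (G * rdiag n (\<lambda>i. f (s i))) * mat_adjoint U = V * (rdiag n (\<lambda>i. f (t i)) * G) * mat_adjoint U"
    by simp
  then show ?thesis
    unfolding G_def using Uc Va Vc Ua
    by (simp add: assoc_mult_mat[of _ n n _ n _ n] unitary_cancel[OF V] unitary_cancel[OF U] unitaryD[OF U] unitaryD[OF V])
qed

lemma mat_fun_eq:
  assumes U: "unitary_mat d U" and A: "A = U * rdiag d s * mat_adjoint U"
  shows "mat_fun d f A = U * rdiag d (\<lambda>i. f (s i)) * mat_adjoint U"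
proof -
  let ?P = "\<lambda>B. \<exists>U s. unitary_mat d U \<and> A = U * rdiag d s * mat_adjoint U \<and>
      B = U * rdiag d (\<lambda>i. f (s i)) * mat_adjoint U"
  have ex: "\<exists>B. ?P B" using U A by blast
  have "?P (mat_fun d f A)" unfolding mat_fun_def by (rule someI_ex[OF ex])
  then obtain U' s' where U': "unitary_mat d U'" and A': "A = U' * rdiag d s' * mat_adjoint U'"
    and B: "mat_fun d f A = U' * rdiag d (\<lambda>i. f (s' i)) * mat_adjoint U'" by blast
  show ?thesis unfolding B by (rule fc_unique[OF U' U]) (use A A' in simp)
qed



lemma row_adj: assumes "(W :: complex mat) \<in> carrier_mat n n" "j < n"
  shows "row (mat_adjoint W) j = conjugate (col W j)"
  using assms by (intro eq_vecI) (auto simp: conjugate_complex_def)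

lemma quad_entry: assumes W: "(W :: complex mat) \<in> carrier_mat n n" and M: "M \<in> carrier_mat n n" and j: "j < n"
  shows "(mat_adjoint W * M * W) $$ (j,j) = (M *\<^sub>v col W j) \<bullet>c col W j"
proof -
  have "mat_adjoint W * M * W = mat_adjoint W * (M * W)"
    by (rule assoc_mult_mat[OF adj_carrier[OF W] M W])
  then have "(mat_adjoint W * M * W) $$ (j,j) = row (mat_adjoint W) j \<bullet> col (M * W) j"
    using W M j by simp
  also have "\<dots> = conjugate (col W j) \<bullet> (M *\<^sub>v col W j)"
    using row_adj[OF W j] col_mult2[OF M W j] by simp
  also have "\<dots> = (M *\<^sub>v col W j) \<bullet>c col W j"
    by (rule conjugate_vec_sprod_comm[symmetric, of _ n]) (use W M j in auto)
  finally show ?thesis .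
qed

lemma adj_quad: assumes A: "(A :: complex mat) \<in> carrier_mat n m" and z: "z \<in> carrier_vec m" and v: "v \<in> carrier_vec n"
  shows "(A *\<^sub>v z) \<bullet>c v = z \<bullet>c (mat_adjoint A *\<^sub>v v)"
proof -
  have "(A *\<^sub>v z) \<bullet>c v = (\<Sum>i<n. (\<Sum>k<m. A $$ (i,k) * z $ k) * cnj (v $ i))"
    using A z v by (simp add: scalar_prod_def lessThan_atLeast0)
  also have "\<dots> = (\<Sum>i<n. \<Sum>k<m. A $$ (i,k) * z $ k * cnj (v $ i))"
    by (simp add: sum_distrib_right)
  also have "\<dots> = (\<Sum>k<m. \<Sum>i<n. A $$ (i,k) * z $ k * cnj (v $ i))"
    by (rule sum.swap)
  also have "\<dots> = (\<Sum>k<m. z $ k * cnj (\<Sum>i<n. cnj (A $$ (i,k)) * v $ i))"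
    by (simp add: sum_distrib_left cnj_sum mult_ac)
  also have "\<dots> = z \<bullet>c (mat_adjoint A *\<^sub>v v)"
    using A z v by (simp add: scalar_prod_def lessThan_atLeast0)
  finally show ?thesis .
qed

lemma psd_conj: assumes U: "(U :: complex mat) \<in> carrier_mat n n" and g: "\<And>i. i < n \<Longrightarrow> g i \<ge> 0"
  shows "psd_mat n (U * rdiag n g * mat_adjoint U)"
  unfolding psd_mat_def hermitian_mat_def
proof (intro conjI ballI)
  show "U * rdiag n g * mat_adjoint U \<in> carrier_mat n n" using U by simp
  show "mat_adjoint (U * rdiag n g * mat_adjoint U) = U * rdiag n g * mat_adjoint U"
    using U by (simp add: adj_mult[of _ n n _ n] assoc_mult_mat[of _ n n _ n _ n])
  fix v :: "complex vec" assume v: "v \<in> carrier_vec n"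
  define w where "w = mat_adjoint U *\<^sub>v v"
  have w: "w \<in> carrier_vec n" unfolding w_def using adj_carrier[OF U] v by simp
  have "(U * rdiag n g * mat_adjoint U *\<^sub>v v) = U *\<^sub>v (rdiag n g *\<^sub>v w)"
    unfolding w_def
    using assoc_mult_mat_vec[OF mult_carrier_sq[OF U mat_diag_dim] adj_carrier[OF U] v]
      assoc_mult_mat_vec[OF U mat_diag_dim w[unfolded w_def]] by simp
  moreover have Dw: "rdiag n g *\<^sub>v w \<in> carrier_vec n" using mult_mat_vec_carrier[OF mat_diag_dim w] .
  moreover have "(U *\<^sub>v (rdiag n g *\<^sub>v w)) \<bullet>c v = (rdiag n g *\<^sub>v w) \<bullet>c w"
    using adj_quad[OF U Dw v] unfolding w_def .
  ultimately have "(U * rdiag n g * mat_adjoint U *\<^sub>v v) \<bullet>c v = (rdiag n g *\<^sub>v w) \<bullet>c w"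
    by simp
  also have "\<dots> = (\<Sum>i<n. (complex_of_real (g i) * w $ i) * cnj (w $ i))"
    using w by (simp add: scalar_prod_def lessThan_atLeast0 mat_diag_def if_distrib[of "\<lambda>x. x * _"] cong: if_cong)
  finally have "Re ((U * rdiag n g * mat_adjoint U *\<^sub>v v) \<bullet>c v) = (\<Sum>i<n. g i * ((Re (w $ i))\<^sup>2 + (Im (w $ i))\<^sup>2))"
    by (simp add: Re_sum mult.assoc power2_eq_square)
  also have "\<dots> \<ge> 0" using g by (intro sum_nonneg) auto
  finally show "0 \<le> Re ((U * rdiag n g * mat_adjoint U *\<^sub>v v) \<bullet>c v)" .
qed

lemma ampliate_1: assumes "M \<in> carrier_mat d d" "T M \<in> carrier_mat d d"
  shows "ampliate 1 d T M = T M"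
proof -
  have "Matrix.mat d d (\<lambda>(a, b). M $$ (0 * d + a, 0 * d + b)) = M"
    using assms by (intro eq_matI) auto
  then show ?thesis unfolding ampliate_def using assms
    by (intro eq_matI) auto
qed

lemma positive_map: assumes "completely_positive d T" "linear_map_mat d T" "psd_mat d M"
  shows "psd_mat d (T M)"
proof -
  have M: "M \<in> carrier_mat d d" using assms(3) unfolding psd_mat_def hermitian_mat_def by auto
  have TM: "T M \<in> carrier_mat d d" using assms(2) M unfolding linear_map_mat_def by auto
  have "psd_mat (1 * d) M \<longrightarrow> psd_mat (1 * d) (ampliate 1 d T M)"
    using assms(1) unfolding completely_positive_def by blast
  then have "psd_mat d (ampliate 1 d T M)" using assms(3) by (metis mult_1)
  then show ?thesis unfolding ampliate_1[of M d T, OF M TM] .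
qed

fun msum :: "nat \<Rightarrow> (nat \<Rightarrow> complex mat) \<Rightarrow> nat \<Rightarrow> complex mat" where
  "msum d f 0 = 0\<^sub>m d d"
| "msum d f (Suc k) = msum d f k + f k"

lemma msum_carrier: "(\<And>i. i < k \<Longrightarrow> f i \<in> carrier_mat d d) \<Longrightarrow> msum d f k \<in> carrier_mat d d"
  by (induction k) auto

lemma msum_index: "(\<And>i. i < k \<Longrightarrow> f i \<in> carrier_mat d d) \<Longrightarrow> a < d \<Longrightarrow> b < d \<Longrightarrow>
    msum d f k $$ (a,b) = (\<Sum>i<k. f i $$ (a,b))"
proof (induction k)
  case 0 then show ?case by simp
next
  case (Suc k)
  have fk: "f k \<in> carrier_mat d d" using Suc.prems by auto
  then show ?case using Suc carrier_matD[OF fk] by simp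
qed

lemma msum_cong: "(\<And>i. i < k \<Longrightarrow> f i = g i) \<Longrightarrow> msum d f k = msum d g k"
  by (induction k) auto

lemma lin_zero: assumes "linear_map_mat d T" shows "T (0\<^sub>m d d) = 0\<^sub>m d d"
proof -
  have z: "(0::complex) \<cdot>\<^sub>m 0\<^sub>m d d = 0\<^sub>m d d" by (intro eq_matI) auto
  have "T ((0::complex) \<cdot>\<^sub>m 0\<^sub>m d d) = 0 \<cdot>\<^sub>m T (0\<^sub>m d d)"
    using assms zero_carrier_mat[of d d] unfolding linear_map_mat_def by blast
  also have "\<dots> = 0\<^sub>m d d"
  proof -
    have c: "T (0\<^sub>m d d) \<in> carrier_mat d d" using assms unfolding linear_map_mat_def by auto
    show ?thesis using carrier_matD[OF c] by (intro eq_matI) auto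
  qed
  finally show ?thesis unfolding z .
qed

lemma msum_lin: assumes T: "linear_map_mat d T" and f: "\<And>i. i < k \<Longrightarrow> f i \<in> carrier_mat d d"
  shows "T (msum d f k) = msum d (\<lambda>i. T (f i)) k"
  using f
proof (induction k)
  case 0 then show ?case using lin_zero[OF T] by simp
next
  case (Suc k)
  have "T (msum d f k + f k) = T (msum d f k) + T (f k)"
    using T Suc.prems msum_carrier[of k f d] unfolding linear_map_mat_def by auto
  then show ?case using Suc by simp
qed

lemma msum_conj: assumes X: "X \<in> carrier_mat d d" and Y: "Y \<in> carrier_mat d d"
  and f: "\<And>i. i < k \<Longrightarrow> f i \<in> carrier_mat d d"
  shows "X * msum d f k * Y = msum d (\<lambda>i. X * f i * Y) k"
  using f
proof (induction k)
  case 0 then show ?case using X Y by simp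
next
  case (Suc k)
  have fk: "f k \<in> carrier_mat d d" and ms: "msum d f k \<in> carrier_mat d d"
    using Suc.prems msum_carrier[of k f d] by auto
  have "X * (msum d f k + f k) * Y = X * msum d f k * Y + X * f k * Y"
    using X Y fk ms by (simp add: mult_add_distrib_mat[OF X ms fk] add_mult_distrib_mat[of _ d d _ _ d])
  then show ?case using Suc by simp
qed

definition Eu :: "nat \<Rightarrow> nat \<Rightarrow> complex mat" where
  "Eu d i = rdiag d (\<lambda>k. if k = i then 1 else 0)"

lemma diag_as_msum: "rdiag d g = msum d (\<lambda>i. complex_of_real (g i) \<cdot>\<^sub>m Eu d i) d"
proof (rule eq_matI)
  fix a b assume "a < dim_row (msum d (\<lambda>i. complex_of_real (g i) \<cdot>\<^sub>m Eu d i) d)"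
    "b < dim_col (msum d (\<lambda>i. complex_of_real (g i) \<cdot>\<^sub>m Eu d i) d)"
  then have a: "a < d" and b: "b < d" using msum_carrier[of d "\<lambda>i. complex_of_real (g i) \<cdot>\<^sub>m Eu d i" d]
    by (auto simp: Eu_def)
  have "msum d (\<lambda>i. complex_of_real (g i) \<cdot>\<^sub>m Eu d i) d $$ (a,b)
      = (\<Sum>i<d. complex_of_real (g i) * (if a = b \<and> b = i then 1 else 0))"
    using a b by (subst msum_index) (auto simp: Eu_def mat_diag_def intro!: sum.cong)
  also have "\<dots> = rdiag d g $$ (a,b)"
    using a b by (auto simp: mat_diag_def if_distrib cong: if_cong)
  finally show "rdiag d g $$ (a,b) = msum d (\<lambda>i. complex_of_real (g i) \<cdot>\<^sub>m Eu d i) d $$ (a,b)" ..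
qed (use msum_carrier[of d "\<lambda>i. complex_of_real (g i) \<cdot>\<^sub>m Eu d i" d] in \<open>auto simp: Eu_def\<close>)

definition Pu :: "nat \<Rightarrow> complex mat \<Rightarrow> nat \<Rightarrow> complex mat" where
  "Pu d U i = U * Eu d i * mat_adjoint U"

lemma Pu_carrier: "U \<in> carrier_mat d d \<Longrightarrow> Pu d U i \<in> carrier_mat d d"
  unfolding Pu_def Eu_def by simp

lemma spec_as_msum: assumes U: "U \<in> carrier_mat d d"
  shows "U * rdiag d g * mat_adjoint U = msum d (\<lambda>i. complex_of_real (g i) \<cdot>\<^sub>m Pu d U i) d"
proof -
  have "U * rdiag d g * mat_adjoint U = msum d (\<lambda>i. U * (complex_of_real (g i) \<cdot>\<^sub>m Eu d i) * mat_adjoint U) d"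
    unfolding diag_as_msum[of d g] using U by (intro msum_conj) (auto simp: Eu_def)
  also have "\<dots> = msum d (\<lambda>i. complex_of_real (g i) \<cdot>\<^sub>m Pu d U i) d"
  proof (rule msum_cong)
    fix i
    have E: "Eu d i \<in> carrier_mat d d" unfolding Eu_def by simp
    show "U * (complex_of_real (g i) \<cdot>\<^sub>m Eu d i) * mat_adjoint U = complex_of_real (g i) \<cdot>\<^sub>m Pu d U i"
      unfolding Pu_def using U E
      by (simp add: mult_smult_distrib[OF U E] mult_smult_assoc_mat[of _ d d _ d])
  qed
  finally show ?thesis .
qed

lemma mtrace_mult_comm: assumes A: "(A :: complex mat) \<in> carrier_mat n m" and B: "B \<in> carrier_mat m n"
  shows "mtrace (A * B) = mtrace (B * A)"
proof -
  have "mtrace (A * B) = (\<Sum>i<n. \<Sum>k<m. A $$ (i,k) * B $$ (k,i))"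
    unfolding mtrace_def using A B by (simp add: scalar_prod_def lessThan_atLeast0)
  also have "\<dots> = (\<Sum>k<m. \<Sum>i<n. B $$ (k,i) * A $$ (i,k))"
    by (subst sum.swap) (simp add: mult.commute)
  also have "\<dots> = mtrace (B * A)"
    unfolding mtrace_def using A B by (simp add: scalar_prod_def lessThan_atLeast0)
  finally show ?thesis .
qed

lemma mtrace_diag: "mtrace (rdiag d g) = (\<Sum>i<d. complex_of_real (g i))"
  unfolding mtrace_def by (simp add: mat_diag_def)

lemma mtrace_spec: assumes U: "unitary_mat d U"
  shows "mtrace (U * rdiag d g * mat_adjoint U) = (\<Sum>i<d. complex_of_real (g i))"
proof -
  note Uc = unitaryD(1)[OF U]
  have "mtrace ((U * rdiag d g) * mat_adjoint U) = mtrace (mat_adjoint U * (U * rdiag d g))"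
    by (rule mtrace_mult_comm[of _ d d]) (use Uc in auto)
  also have "mat_adjoint U * (U * rdiag d g) = rdiag d g"
    by (rule unitary_cancel[OF U]) simp
  finally show ?thesis by (simp add: mtrace_diag)
qed

lemma conj_spec: assumes U: "unitary_mat d U"
  shows "(U * rdiag d g * mat_adjoint U) * (U * rdiag d h * mat_adjoint U) = U * rdiag d (\<lambda>i. g i * h i) * mat_adjoint U"
proof -
  note Uc = unitaryD(1)[OF U]
  have "(U * rdiag d g * mat_adjoint U) * (U * rdiag d h * mat_adjoint U)
      = U * (rdiag d g * (mat_adjoint U * (U * (rdiag d h * mat_adjoint U))))"
    using Uc by (simp add: assoc_mult_mat[of _ d d _ d _ d])
  also have "mat_adjoint U * (U * (rdiag d h * mat_adjoint U)) = rdiag d h * mat_adjoint U"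
    by (rule unitary_cancel[OF U]) simp
  also have "U * (rdiag d g * (rdiag d h * mat_adjoint U)) = U * rdiag d (\<lambda>i. g i * h i) * mat_adjoint U"
    using Uc by (simp add: assoc_mult_mat[of _ d d _ d _ d, symmetric])
  finally show ?thesis .
qed

lemma wnorm_spec: assumes d: "0 < d" and U: "unitary_mat d U" and A: "A = U * rdiag d g * mat_adjoint U"
  and g: "\<And>i. i < d \<Longrightarrow> g i \<ge> 0" and q: "q > 0"
  shows "wnorm d q A powr q = (1 / real d) * (\<Sum>i<d. g i powr q)"
proof -
  note Uc = unitaryD(1)[OF U]
  have adjA: "mat_adjoint A = A" unfolding A using Uc
    by (simp add: adj_mult[of _ d d _ d] assoc_mult_mat[of _ d d _ d _ d])
  have AA: "mat_adjoint A * A = U * rdiag d (\<lambda>i. g i * g i) * mat_adjoint U"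
    unfolding adjA unfolding A by (rule conj_spec[OF U])
  have abs: "mat_abs d A = A"
  proof -
    have "mat_abs d A = U * rdiag d (\<lambda>i. sqrt (g i * g i)) * mat_adjoint U"
      unfolding mat_abs_def AA by (rule mat_fun_eq[OF U refl])
    also have "rdiag d (\<lambda>i. sqrt (g i * g i)) = rdiag d g"
      using g by (intro eq_matI) (auto simp: mat_diag_def real_sqrt_mult_self)
    also have "U * rdiag d g * mat_adjoint U = A" unfolding A ..
    finally show ?thesis .
  qed
  have "mat_rpow d (mat_abs d A) q = U * rdiag d (\<lambda>i. g i powr q) * mat_adjoint U"
    unfolding abs mat_rpow_def by (rule mat_fun_eq[OF U A])
  then have tr: "Re (mtrace (mat_rpow d (mat_abs d A) q)) = (\<Sum>i<d. g i powr q)"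
    by (simp add: mtrace_spec[OF U] Re_sum)
  have S: "(\<Sum>i<d. g i powr q) \<ge> 0" by (intro sum_nonneg) auto
  have "wnorm d q A powr q = (real d powr (- 1 / q)) powr q * ((\<Sum>i<d. g i powr q) powr (1 / q)) powr q"
    unfolding wnorm_def tr by (simp add: powr_mult)
  also have "\<dots> = real d powr (- 1) * (\<Sum>i<d. g i powr q)"
    using q S by (simp add: powr_powr powr_one)
  also have "\<dots> = (1 / real d) * (\<Sum>i<d. g i powr q)" using d by (simp add: powr_minus_divide)
  finally show ?thesis .
qed

definition Emat :: "nat \<Rightarrow> nat \<Rightarrow> nat \<Rightarrow> complex mat" where
  "Emat d k l = Matrix.mat d d (\<lambda>(i,j). if i = k \<and> j = l then 1 else 0)"

lemma Emat_carrier[simp]: "Emat d k l \<in> carrier_mat d d"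
  unfolding Emat_def by simp

lemma B_decomp: assumes B: "B \<in> carrier_mat d d"
  shows "B = msum d (\<lambda>k. msum d (\<lambda>l. B $$ (k,l) \<cdot>\<^sub>m Emat d k l) d) d"
proof -
  have inner: "\<And>k. msum d (\<lambda>l. B $$ (k,l) \<cdot>\<^sub>m Emat d k l) d \<in> carrier_mat d d"
    by (rule msum_carrier) simp
  have outer: "msum d (\<lambda>k. msum d (\<lambda>l. B $$ (k,l) \<cdot>\<^sub>m Emat d k l) d) d \<in> carrier_mat d d"
    by (rule msum_carrier) (rule inner)
  show ?thesis
  proof (rule eq_matI)
    fix a b assume "a < dim_row (msum d (\<lambda>k. msum d (\<lambda>l. B $$ (k,l) \<cdot>\<^sub>m Emat d k l) d) d)"
      "b < dim_col (msum d (\<lambda>k. msum d (\<lambda>l. B $$ (k,l) \<cdot>\<^sub>m Emat d k l) d) d)"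
    then have a: "a < d" and b: "b < d" using outer by auto
    have "msum d (\<lambda>k. msum d (\<lambda>l. B $$ (k,l) \<cdot>\<^sub>m Emat d k l) d) d $$ (a,b)
       = (\<Sum>k<d. \<Sum>l<d. B $$ (k,l) * (if a = k \<and> b = l then 1 else 0))"
      using a b inner by (simp add: msum_index Emat_def)
    also have "\<dots> = (\<Sum>k<d. if a = k then (\<Sum>l<d. if b = l then B $$ (k,l) else 0) else 0)"
      by (intro sum.cong refl) (auto simp: if_distrib[of "\<lambda>x. B $$ _ * x"] cong: if_cong)
    also have "\<dots> = B $$ (a,b)"
      using a b by simp
    finally show "B $$ (a,b) = msum d (\<lambda>k. msum d (\<lambda>l. B $$ (k,l) \<cdot>\<^sub>m Emat d k l) d) d $$ (a,b)" ..
  qed (use B outer in auto)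
qed

lemma mtrace_add: assumes "(A :: complex mat) \<in> carrier_mat n n" "B \<in> carrier_mat n n"
  shows "mtrace (A + B) = mtrace A + mtrace B"
  using assms unfolding mtrace_def by (simp add: sum.distrib)

lemma mtrace_msum: assumes X: "X \<in> carrier_mat d d" and f: "\<And>i. i < k \<Longrightarrow> f i \<in> carrier_mat d d"
  shows "mtrace (X * msum d f k) = (\<Sum>i<k. mtrace (X * f i))"
  using f
proof (induction k)
  case 0
  have "X * 0\<^sub>m d d = 0\<^sub>m d d" using X by simp
  then show ?case unfolding mtrace_def by simp
next
  case (Suc k)
  have fk: "f k \<in> carrier_mat d d" and ms: "msum d f k \<in> carrier_mat d d"
    using Suc.prems msum_carrier[of k f d] by auto
  have "mtrace (X * (msum d f k + f k)) = mtrace (X * msum d f k) + mtrace (X * f k)"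
    by (simp add: mult_add_distrib_mat[OF X ms fk] mtrace_add[of _ d] X ms fk)
  then show ?case using Suc by simp
qed

lemma mtrace_smult: assumes X: "X \<in> carrier_mat d d" and M: "M \<in> carrier_mat d d"
  shows "mtrace (X * (c \<cdot>\<^sub>m M)) = c * mtrace (X * M)"
  using X M unfolding mtrace_def by (simp add: mult_smult_distrib[OF X M] sum_distrib_left)

lemma hs_exists: assumes T: "linear_map_mat d T" and A: "(A :: complex mat) \<in> carrier_mat d d"
  shows "\<exists>C. C \<in> carrier_mat d d \<and>
      (\<forall>B \<in> carrier_mat d d. mtrace (mat_adjoint C * B) = mtrace (mat_adjoint A * T B))"
proof -
  define t where "t = (\<lambda>k l. mtrace (mat_adjoint A * T (Emat d k l)))"
  define C where "C = Matrix.mat d d (\<lambda>(k,l). cnj (t k l))"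
  have TE: "\<And>k l. T (Emat d k l) \<in> carrier_mat d d" using T unfolding linear_map_mat_def by auto
  have Ac: "mat_adjoint A \<in> carrier_mat d d" using A by simp
  have "\<forall>B \<in> carrier_mat d d. mtrace (mat_adjoint C * B) = mtrace (mat_adjoint A * T B)"
  proof
    fix B :: "complex mat" assume B: "B \<in> carrier_mat d d"
    have inner: "\<And>k. msum d (\<lambda>l. B $$ (k,l) \<cdot>\<^sub>m Emat d k l) d \<in> carrier_mat d d"
      by (rule msum_carrier) simp
    have Tin: "\<And>k. T (msum d (\<lambda>l. B $$ (k,l) \<cdot>\<^sub>m Emat d k l) d) = msum d (\<lambda>l. B $$ (k,l) \<cdot>\<^sub>m T (Emat d k l)) d"
    proof -
      fix k
      have "T (msum d (\<lambda>l. B $$ (k,l) \<cdot>\<^sub>m Emat d k l) d) = msum d (\<lambda>l. T (B $$ (k,l) \<cdot>\<^sub>m Emat d k l)) d"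
        by (rule msum_lin[OF T]) simp
      also have "\<dots> = msum d (\<lambda>l. B $$ (k,l) \<cdot>\<^sub>m T (Emat d k l)) d"
        using T unfolding linear_map_mat_def by (intro msum_cong) simp
      finally show "T (msum d (\<lambda>l. B $$ (k,l) \<cdot>\<^sub>m Emat d k l) d) = msum d (\<lambda>l. B $$ (k,l) \<cdot>\<^sub>m T (Emat d k l)) d" .
    qed
    have "mtrace (mat_adjoint A * T B) = mtrace (mat_adjoint A * msum d (\<lambda>k. msum d (\<lambda>l. B $$ (k,l) \<cdot>\<^sub>m T (Emat d k l)) d) d)"
      by (subst B_decomp[OF B], subst msum_lin[OF T inner]) (simp add: Tin)
    also have "\<dots> = (\<Sum>k<d. \<Sum>l<d. B $$ (k,l) * t k l)"
      using Ac TE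
      by (simp add: mtrace_msum[OF Ac] msum_carrier mtrace_smult[OF Ac] t_def)
    also have "\<dots> = mtrace (mat_adjoint C * B)"
      unfolding mtrace_def C_def using B
      by (simp add: scalar_prod_def lessThan_atLeast0 mult.commute)
         (subst sum.swap, rule refl)
    finally show "mtrace (mat_adjoint C * B) = mtrace (mat_adjoint A * T B)" ..
  qed
  moreover have "C \<in> carrier_mat d d" unfolding C_def by simp
  ultimately show ?thesis by blast
qed

lemma hs_adjoint_prop: assumes T: "linear_map_mat d T" and A: "(A :: complex mat) \<in> carrier_mat d d"
  shows "hs_adjoint d T A \<in> carrier_mat d d"
    "\<And>B. B \<in> carrier_mat d d \<Longrightarrow> mtrace (mat_adjoint (hs_adjoint d T A) * B) = mtrace (mat_adjoint A * T B)"
proof -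
  have "hs_adjoint d T A \<in> carrier_mat d d \<and>
      (\<forall>B \<in> carrier_mat d d. mtrace (mat_adjoint (hs_adjoint d T A) * B) = mtrace (mat_adjoint A * T B))"
    unfolding hs_adjoint_def by (rule someI_ex[OF hs_exists[OF T A]])
  then show "hs_adjoint d T A \<in> carrier_mat d d"
    "\<And>B. B \<in> carrier_mat d d \<Longrightarrow> mtrace (mat_adjoint (hs_adjoint d T A) * B) = mtrace (mat_adjoint A * T B)"
    by auto
qed

lemma T_spec: assumes T: "linear_map_mat d T" and U: "U \<in> carrier_mat d d"
  shows "T (U * rdiag d g * mat_adjoint U) = msum d (\<lambda>i. complex_of_real (g i) \<cdot>\<^sub>m T (Pu d U i)) d"
proof -
  have "T (U * rdiag d g * mat_adjoint U) = msum d (\<lambda>i. T (complex_of_real (g i) \<cdot>\<^sub>m Pu d U i)) d"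
    unfolding spec_as_msum[OF U] by (rule msum_lin[OF T]) (simp add: Pu_carrier[OF U])
  also have "\<dots> = msum d (\<lambda>i. complex_of_real (g i) \<cdot>\<^sub>m T (Pu d U i)) d"
    using T Pu_carrier[OF U] unfolding linear_map_mat_def by (intro msum_cong) simp
  finally show ?thesis .
qed

lemma quad_msum: assumes W: "W \<in> carrier_mat d d" and M: "\<And>i. i < k \<Longrightarrow> M i \<in> carrier_mat d d" and j: "j < d"
  shows "(mat_adjoint W * msum d (\<lambda>i. c i \<cdot>\<^sub>m M i) k * W) $$ (j,j) = (\<Sum>i<k. c i * (mat_adjoint W * M i * W) $$ (j,j))"
proof -
  have Wa: "mat_adjoint W \<in> carrier_mat d d" using W by simp
  have "mat_adjoint W * msum d (\<lambda>i. c i \<cdot>\<^sub>m M i) k * W = msum d (\<lambda>i. mat_adjoint W * (c i \<cdot>\<^sub>m M i) * W) k"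
    by (rule msum_conj[OF Wa W]) (use M in simp)
  also have "\<dots> = msum d (\<lambda>i. c i \<cdot>\<^sub>m (mat_adjoint W * M i * W)) k"
  proof (rule msum_cong)
    fix i assume "i < k"
    then have Mi: "M i \<in> carrier_mat d d" using M by simp
    have "mat_adjoint W * (c i \<cdot>\<^sub>m M i) = c i \<cdot>\<^sub>m (mat_adjoint W * M i)"
      by (rule mult_smult_distrib[OF Wa Mi])
    moreover have "(c i \<cdot>\<^sub>m (mat_adjoint W * M i)) * W = c i \<cdot>\<^sub>m (mat_adjoint W * M i * W)"
      by (rule mult_smult_assoc_mat[OF mult_carrier_sq[OF Wa Mi] W])
    ultimately show "mat_adjoint W * (c i \<cdot>\<^sub>m M i) * W = c i \<cdot>\<^sub>m (mat_adjoint W * M i * W)" by simp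
  qed
  finally show ?thesis using j M W by (simp add: msum_index)
qed

lemma mtrace_adj: assumes "(M :: complex mat) \<in> carrier_mat n n"
  shows "mtrace (mat_adjoint M) = cnj (mtrace M)"
  using assms unfolding mtrace_def by (simp add: cnj_sum)

lemma frob: assumes G: "(G :: complex mat) \<in> carrier_mat d d"
  shows "(\<Sum>j<d. (Re (G $$ (j,j)))\<^sup>2) \<le> Re (mtrace (mat_adjoint G * G))"
proof -
  have "Re (mtrace (mat_adjoint G * G)) = (\<Sum>j<d. \<Sum>k<d. (cmod (G $$ (k,j)))\<^sup>2)"
  proof -
    have "mtrace (mat_adjoint G * G) = (\<Sum>j<d. \<Sum>k<d. cnj (G $$ (k,j)) * G $$ (k,j))"
      unfolding mtrace_def using G by (simp add: scalar_prod_def lessThan_atLeast0)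
    also have "\<dots> = (\<Sum>j<d. \<Sum>k<d. complex_of_real ((cmod (G $$ (k,j)))\<^sup>2))"
      by (intro sum.cong refl) (metis complex_norm_square mult.commute)
    finally show ?thesis by (simp add: Re_sum)
  qed
  moreover have "(Re (G $$ (j,j)))\<^sup>2 \<le> (\<Sum>k<d. (cmod (G $$ (k,j)))\<^sup>2)" if j: "j < d" for j
  proof -
    have "(Re (G $$ (j,j)))\<^sup>2 \<le> (cmod (G $$ (j,j)))\<^sup>2"
      using power_mono[OF abs_Re_le_cmod[of "G $$ (j,j)"] abs_ge_zero, of 2] by simp
    also have "\<dots> \<le> (\<Sum>k<d. (cmod (G $$ (k,j)))\<^sup>2)"
      by (rule member_le_sum[of j "{..<d}" "\<lambda>k. (cmod (G $$ (k,j)))\<^sup>2"]) (use j in auto)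
    finally show ?thesis .
  qed
  ultimately show ?thesis by (metis (no_types, lifting) lessThan_iff sum_mono)
qed

lemma tr_conj_inv: assumes W: "unitary_mat d W" and B: "(B :: complex mat) \<in> carrier_mat d d"
  shows "mtrace (mat_adjoint (mat_adjoint W * B * W) * (mat_adjoint W * B * W)) = mtrace (mat_adjoint B * B)"
proof -
  note Wc = unitaryD(1)[OF W]
  have Ba: "mat_adjoint B \<in> carrier_mat d d" using B by simp
  have Wa: "mat_adjoint W \<in> carrier_mat d d" using Wc by simp
  have "mat_adjoint (mat_adjoint W * B * W) * (mat_adjoint W * B * W)
      = mat_adjoint W * (mat_adjoint B * (W * (mat_adjoint W * (B * W))))"
    using Wc B Ba Wa by (simp add: adj_mult[of _ d d _ d] assoc_mult_mat[of _ d d _ d _ d])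
  also have "W * (mat_adjoint W * (B * W)) = B * W"
    by (rule unitary_cancel[OF W]) (use B in simp)
  also have "mtrace (mat_adjoint W * (mat_adjoint B * (B * W))) = mtrace ((mat_adjoint B * (B * W)) * mat_adjoint W)"
    by (rule mtrace_mult_comm[of _ d d]) (use Wa Ba B Wc in simp_all)
  also have "(mat_adjoint B * (B * W)) * mat_adjoint W = mat_adjoint B * B * (W * mat_adjoint W)"
    using Wc B Ba Wa by (simp add: assoc_mult_mat[of _ d d _ d _ d])
  also have "\<dots> = mat_adjoint B * B" using unitaryD(3)[OF W] Ba B by simp
  finally show ?thesis .
qed

lemma unconj: assumes U: "unitary_mat d U" and M: "M \<in> carrier_mat d d"
  shows "mat_adjoint U * (U * M * mat_adjoint U) * U = M"
proof -
  note Uc = unitaryD(1)[OF U]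
  have Ua: "mat_adjoint U \<in> carrier_mat d d" using Uc by simp
  have "mat_adjoint U * (U * M * mat_adjoint U) * U = mat_adjoint U * (U * (M * (mat_adjoint U * U)))"
    using Uc Ua M by (simp add: assoc_mult_mat[of _ d d _ d _ d])
  also have "mat_adjoint U * U = 1\<^sub>m d" using unitaryD(2)[OF U] .
  also have "M * 1\<^sub>m d = M" using M by simp
  also have "mat_adjoint U * (U * M) = M" by (rule unitary_cancel[OF U]) (use M in simp)
  finally show ?thesis .
qed

lemma adj_spec: assumes U: "U \<in> carrier_mat d d"
  shows "mat_adjoint (U * rdiag d g * mat_adjoint U) = U * rdiag d g * mat_adjoint U"
  using U by (simp add: adj_mult[of _ d d _ d] assoc_mult_mat[of _ d d _ d _ d])

lemma mtrace_minus: assumes "(A :: complex mat) \<in> carrier_mat n n" "B \<in> carrier_mat n n"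
  shows "mtrace (A - B) = mtrace A - mtrace B"
  using assms unfolding mtrace_def by (simp add: sum_subtractf)

lemma col_unit: assumes U: "unitary_mat d U" and i: "i < d"
  shows "col U i \<in> carrier_vec d" "col U i \<noteq> 0\<^sub>v d"
proof -
  note Uc = unitaryD(1)[OF U]
  show cu: "col U i \<in> carrier_vec d" using Uc i by (simp add: carrier_vecI)
  have "(mat_adjoint U * 1\<^sub>m d * U) $$ (i,i) = (1\<^sub>m d *\<^sub>v col U i) \<bullet>c col U i"
    by (rule quad_entry[OF Uc one_carrier_mat i])
  moreover have "mat_adjoint U * 1\<^sub>m d * U = 1\<^sub>m d" using Uc unitaryD(2)[OF U] by simp
  ultimately have "col U i \<bullet>c col U i = 1" using i cu by simp
  then show "col U i \<noteq> 0\<^sub>v d" by auto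
qed

theorem mainTheorem14:
  fixes d :: nat and T :: "complex mat \<Rightarrow> complex mat" and X :: "complex mat" and q :: real
  assumes "0 < d"
    and "doubly_stochastic_channel d T"
    and "pd_mat d X"
    and "2 \<le> q"
  shows "wnorm d q (T X) powr q - wnorm d q X powr q
           \<le> - dirichlet d (\<lambda>Y. hs_adjoint d T (T Y) - Y) (mat_rpow d X (q / 2))"
proof -
  have d: "0 < d" by fact
  from assms(2) have lin: "linear_map_mat d T" and cp: "completely_positive d T" and T1: "T (1\<^sub>m d) = 1\<^sub>m d"
    unfolding doubly_stochastic_channel_def by auto
  have Tc: "\<And>M. M \<in> carrier_mat d d \<Longrightarrow> T M \<in> carrier_mat d d" using lin unfolding linear_map_mat_def by auto
  from assms(3) have Xc: "X \<in> carrier_mat d d" and hX: "mat_adjoint X = X"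
    and pdX: "\<forall>v\<in>carrier_vec d. v \<noteq> 0\<^sub>v d \<longrightarrow> 0 < Re ((X *\<^sub>v v) \<bullet>c v)"
    unfolding pd_mat_def hermitian_mat_def by auto
  obtain U lam where U: "unitary_mat d U" and Xeq: "X = U * rdiag d lam * mat_adjoint U"
    using spectral[OF Xc hX] by blast
  note Uc = unitaryD(1)[OF U]
  have lampos: "lam i > 0" if i: "i < d" for i
  proof -
    have "(mat_adjoint U * X * U) $$ (i,i) = (X *\<^sub>v col U i) \<bullet>c col U i"
      by (rule quad_entry[OF Uc Xc i])
    moreover have "mat_adjoint U * X * U = rdiag d lam" unfolding Xeq by (rule unconj[OF U]) simp
    ultimately have "complex_of_real (lam i) = (X *\<^sub>v col U i) \<bullet>c col U i" using i by (simp add: mat_diag_def)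
    moreover have "0 < Re ((X *\<^sub>v col U i) \<bullet>c col U i)" using pdX col_unit[OF U i] by blast
    ultimately show ?thesis by (metis Re_complex_of_real)
  qed
  define p where "p = q / 2"
  have p1: "p \<ge> 1" using assms(4) unfolding p_def by simp
  have qpp: "q = p + p" unfolding p_def by simp
  define Y where "Y = mat_rpow d X p"
  have Yeq: "Y = U * rdiag d (\<lambda>i. lam i powr p) * mat_adjoint U"
    unfolding Y_def mat_rpow_def by (rule mat_fun_eq[OF U Xeq])
  have Yc: "Y \<in> carrier_mat d d" unfolding Yeq using Uc by simp
  have hY: "mat_adjoint Y = Y" unfolding Yeq by (rule adj_spec[OF Uc])
  have Xpsd: "psd_mat d X" unfolding Xeq by (rule psd_conj[OF Uc]) (use lampos in \<open>auto intro: less_imp_le\<close>)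
  define A where "A = T X"
  have Apsd: "psd_mat d A" unfolding A_def by (rule positive_map[OF cp lin Xpsd])
  then have Ac: "A \<in> carrier_mat d d" and hA: "mat_adjoint A = A"
    unfolding psd_mat_def hermitian_mat_def by auto
  obtain W mu where W: "unitary_mat d W" and Aeq: "A = W * rdiag d mu * mat_adjoint W"
    using spectral[OF Ac hA] by blast
  note Wc = unitaryD(1)[OF W]
  have AW: "mat_adjoint W * A * W = rdiag d mu" unfolding Aeq by (rule unconj[OF W]) simp
  define B where "B = T Y"
  have Bc: "B \<in> carrier_mat d d" unfolding B_def using Tc[OF Yc] .
  define P where "P = (\<lambda>i. T (Pu d U i))"
  have Pc: "\<And>i. P i \<in> carrier_mat d d" unfolding P_def using Tc Pu_carrier[OF Uc] by blast
  have Ppsd: "psd_mat d (P i)" for i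
    unfolding P_def
    by (rule positive_map[OF cp lin]) (unfold Pu_def Eu_def, rule psd_conj[OF Uc], simp)
  define s where "s = (\<lambda>i j. Re ((mat_adjoint W * P i * W) $$ (j,j)))"
  have s_nonneg: "s i j \<ge> 0" if j: "j < d" for i j
  proof -
    have "(mat_adjoint W * P i * W) $$ (j,j) = (P i *\<^sub>v col W j) \<bullet>c col W j"
      by (rule quad_entry[OF Wc Pc j])
    moreover have "0 \<le> Re ((P i *\<^sub>v col W j) \<bullet>c col W j)"
      using Ppsd[of i] col_unit(1)[OF W j] unfolding psd_mat_def by blast
    ultimately show ?thesis unfolding s_def by simp
  qed
  have quadT: "(mat_adjoint W * T (U * rdiag d g * mat_adjoint U) * W) $$ (j,j) = (\<Sum>i<d. complex_of_real (g i) * (mat_adjoint W * P i * W) $$ (j,j))"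
    if j: "j < d" for g j
    unfolding T_spec[OF lin Uc] P_def by (rule quad_msum[OF Wc _ j]) (use Tc Pu_carrier[OF Uc] in blast)
  have s_sum: "(\<Sum>i<d. s i j) = 1" if j: "j < d" for j
  proof -
    have one: "U * rdiag d (\<lambda>_. 1) * mat_adjoint U = 1\<^sub>m d"
      using Uc unitaryD(3)[OF U] by simp
    have "(mat_adjoint W * T (U * rdiag d (\<lambda>_. 1) * mat_adjoint U) * W) $$ (j,j) = 1"
      unfolding one T1 using Wc unitaryD(2)[OF W] j by simp
    then have "(\<Sum>i<d. (mat_adjoint W * P i * W) $$ (j,j)) = 1" using quadT[OF j, of "\<lambda>_. 1"] by simp
    then show ?thesis unfolding s_def by (metis Re_sum one_complex.sel(1))
  qed
  have mu_eq: "mu j = (\<Sum>i<d. s i j * lam i)" if j: "j < d" for j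
  proof -
    have "(mat_adjoint W * A * W) $$ (j,j) = complex_of_real (mu j)" unfolding AW using j by (simp add: mat_diag_def)
    then have "complex_of_real (mu j) = (\<Sum>i<d. complex_of_real (lam i) * (mat_adjoint W * P i * W) $$ (j,j))"
      using quadT[OF j, of lam] unfolding A_def Xeq by simp
    then have "mu j = Re (\<Sum>i<d. complex_of_real (lam i) * (mat_adjoint W * P i * W) $$ (j,j))"
      by (metis Re_complex_of_real)
    then show ?thesis unfolding s_def by (simp add: Re_sum mult.commute)
  qed
  have beta_eq: "Re ((mat_adjoint W * B * W) $$ (j,j)) = (\<Sum>i<d. s i j * lam i powr p)" if j: "j < d" for j
  proof -
    have "(mat_adjoint W * B * W) $$ (j,j) = (\<Sum>i<d. complex_of_real (lam i powr p) * (mat_adjoint W * P i * W) $$ (j,j))"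
      using quadT[OF j, of "\<lambda>i. lam i powr p"] unfolding B_def Yeq by simp
    then show ?thesis unfolding s_def by (simp add: Re_sum mult.commute)
  qed
  have mu_nonneg: "mu j \<ge> 0" if j: "j < d" for j
    unfolding mu_eq[OF j] using s_nonneg[OF j] lampos by (intro sum_nonneg) (auto intro: mult_nonneg_nonneg less_imp_le)
  have jensen: "mu j powr p \<le> Re ((mat_adjoint W * B * W) $$ (j,j))" if j: "j < d" for j
  proof -
    have "(\<Sum>i<d. s i j *\<^sub>R lam i) powr p \<le> (\<Sum>i<d. s i j * lam i powr p)"
      by (rule convex_on_sum[OF _ _ powr_convex[OF p1]]) (use d s_sum[OF j] s_nonneg[OF j] lampos in auto)
    then show ?thesis unfolding mu_eq[OF j] beta_eq[OF j] by simp
  qed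
  define G where "G = mat_adjoint W * B * W"
  have Gc: "G \<in> carrier_mat d d" unfolding G_def using Wc Bc by simp
  have key: "(\<Sum>j<d. mu j powr q) \<le> Re (mtrace (mat_adjoint B * B))"
  proof -
    have "(\<Sum>j<d. mu j powr q) \<le> (\<Sum>j<d. (Re (G $$ (j,j)))\<^sup>2)"
    proof (rule sum_mono)
      fix j assume "j \<in> {..<d}"
      then have j: "j < d" by simp
      have "mu j powr q = mu j powr p * mu j powr p" unfolding qpp by (rule powr_add)
      also have "\<dots> \<le> Re (G $$ (j,j)) * Re (G $$ (j,j))"
        using jensen[OF j] order_trans[OF powr_ge_zero jensen[OF j]] unfolding G_def by (intro mult_mono) auto
      finally show "mu j powr q \<le> (Re (G $$ (j,j)))\<^sup>2" by (simp add: power2_eq_square)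
    qed
    also have "\<dots> \<le> Re (mtrace (mat_adjoint G * G))" by (rule frob[OF Gc])
    also have "mtrace (mat_adjoint G * G) = mtrace (mat_adjoint B * B)"
      unfolding G_def by (rule tr_conj_inv[OF W Bc])
    finally show ?thesis .
  qed
  have lhsA: "wnorm d q (T X) powr q = (1 / real d) * (\<Sum>j<d. mu j powr q)"
    unfolding A_def[symmetric] by (rule wnorm_spec[OF d W Aeq]) (use mu_nonneg assms(4) in auto)
  have lhsX: "wnorm d q X powr q = (1 / real d) * (\<Sum>i<d. lam i powr q)"
    by (rule wnorm_spec[OF d U Xeq]) (use lampos assms(4) in \<open>auto intro: less_imp_le\<close>)
  define C where "C = hs_adjoint d T B"
  have Cc: "C \<in> carrier_mat d d" unfolding C_def by (rule hs_adjoint_prop(1)[OF lin Bc])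
  have CY: "mtrace (mat_adjoint C * Y) = mtrace (mat_adjoint B * B)"
    unfolding C_def using hs_adjoint_prop(2)[OF lin Bc Yc] unfolding B_def by simp
  have CY2: "mtrace (mat_adjoint C * Y) = cnj (mtrace (C * Y))"
  proof -
    have "mat_adjoint C * Y = mat_adjoint (mat_adjoint Y * C)"
      using adj_mult[OF adj_carrier[OF Yc] Cc] by simp
    then have "mtrace (mat_adjoint C * Y) = cnj (mtrace (mat_adjoint Y * C))"
      using mtrace_adj[of "mat_adjoint Y * C" d] Yc Cc by simp
    also have "mtrace (mat_adjoint Y * C) = mtrace (C * Y)"
      unfolding hY by (rule mtrace_mult_comm[OF Yc Cc])
    finally show ?thesis .
  qed
  have YY: "mtrace (Y * Y) = (\<Sum>i<d. complex_of_real (lam i powr q))"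
  proof -
    have "Y * Y = U * rdiag d (\<lambda>i. lam i powr p * lam i powr p) * mat_adjoint U"
      unfolding Yeq by (rule conj_spec[OF U])
    then have "mtrace (Y * Y) = (\<Sum>i<d. complex_of_real (lam i powr p * lam i powr p))"
      using mtrace_spec[OF U, of "\<lambda>i. lam i powr p * lam i powr p"] by metis
    also have "\<dots> = (\<Sum>i<d. complex_of_real (lam i powr q))"
      unfolding qpp powr_add ..
    finally show ?thesis .
  qed
  have rhs: "- dirichlet d (\<lambda>Y. hs_adjoint d T (T Y) - Y) (mat_rpow d X (q / 2))
      = (1 / real d) * (Re (mtrace (mat_adjoint B * B)) - (\<Sum>i<d. lam i powr q))"
  proof -
    have "- dirichlet d (\<lambda>Y. hs_adjoint d T (T Y) - Y) (mat_rpow d X (q / 2))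
        = (1 / real d) * Re (mtrace ((C - Y) * Y))"
      unfolding dirichlet_def C_def B_def Y_def p_def by simp
    also have "(C - Y) * Y = C * Y - Y * Y" by (rule minus_mult_distrib_mat[OF Cc Yc Yc])
    also have "mtrace (C * Y - Y * Y) = mtrace (C * Y) - mtrace (Y * Y)"
      by (rule mtrace_minus[of _ d]) (use Cc Yc in simp_all)
    also have "Re (mtrace (C * Y) - mtrace (Y * Y)) = Re (mtrace (mat_adjoint B * B)) - (\<Sum>i<d. lam i powr q)"
    proof -
      have "cnj (mtrace (C * Y)) = mtrace (mat_adjoint B * B)" using CY CY2 by simp
      then have "Re (cnj (mtrace (C * Y))) = Re (mtrace (mat_adjoint B * B))" by (rule arg_cong)
      then have "Re (mtrace (C * Y)) = Re (mtrace (mat_adjoint B * B))" by simp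
      then show ?thesis using YY by (simp add: Re_sum)
    qed
    finally show ?thesis .
  qed
  have "(1 / real d) * (\<Sum>j<d. mu j powr q) \<le> (1 / real d) * Re (mtrace (mat_adjoint B * B))"
    by (rule mult_left_mono[OF key]) simp
  then show ?thesis unfolding lhsA lhsX rhs right_diff_distrib by linarith
qed


end
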